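(* Let $G$ be a map graph with a corresponding planar bipartite graph $B$, let $k$ be a positive integer, let $\mathcal{D}=(T,\beta_{\mathcal{D}})$ be a nice tree decomposition of $B$ of width less than $5\sqrt{2k}$, and let $\mathcal{D}'=(T,\beta_{\mathcal{D}'})$ be the tree decomposition of $G$ derived from $\mathcal{D}$. Let $C$ be a cycle in $G$. Then there is a cycle $C'$ in $G$ of the same length as $C$ such that for every node $t\in V(T)$, the number of edges of $C'$ with one endpoint in $\beta_{\mathcal{D}'}(t)$ and the other in $V(G)\setminus\gamma_{\mathcal{D}'}(t)$ is at most $20\sqrt{2k}$.
   Context: All graphs are finite and simple. For a bipartite graph $B$ with bipartition $V(B)=W\uplus U$, the half-square of $B$ is the graph on $W$ in which two vertices are adjacent iff they are at distance exactly $2$ in $B$. A graph $G$ is a map graph iff it is the half-square of some planar bipartite graph $B$; such $B$ (with $W=V(G)$) is a corresponding planar bipartite graph, and $S(G)=U$ is the set of special vertices. A tree decomposition $(T,\beta)$: rooted tree, bags covering all vertices and edges, each vertex's nodes inducing a connected subtree; width is max bag size minus one. $\gamma_{\mathcal{D}}(t)$ (resp. $\gamma_{\mathcal{D}'}(t)$) is the union of bags at $t$ and its descendants. A nice tree decomposition has empty root bag and leaf, introduce, forget and join nodes in the standard sense. The decomposition derived from $\mathcal{D}$ has the same tree and bags $\beta_{\mathcal{D}'}(t)=(\beta_{\mathcal{D}}(t)\cap V(G))\cup\bigcup_{s\in\beta_{\mathcal{D}}(t)\cap S(G)}(N_B(s)\cap\gamma_{\mathcal{D}}(t))$. *)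

theory Defs
  imports "HOL-Analysis.Analysis"
begin

definition simple_graph :: "'a set \<Rightarrow> 'a set set \<Rightarrow> bool" where
  "simple_graph V E \<longleftrightarrow> finite V \<and>
     (\<forall>e\<in>E. \<exists>u v. e = {u, v} \<and> u \<noteq> v \<and> u \<in> V \<and> v \<in> V)"

definition bipartition :: "'a set \<Rightarrow> 'a set set \<Rightarrow> 'a set \<Rightarrow> 'a set \<Rightarrow> bool" where
  "bipartition V E W U \<longleftrightarrow> V = W \<union> U \<and> W \<inter> U = {} \<and>
     (\<forall>e\<in>E. \<exists>w u. e = {w, u} \<and> w \<in> W \<and> u \<in> U)"

definition dist2 :: "'a set set \<Rightarrow> 'a \<Rightarrow> 'a \<Rightarrow> bool" where
  "dist2 E x y \<longleftrightarrow> x \<noteq> y \<and> {x, y} \<notin> E \<and> (\<exists>s. {x, s} \<in> E \<and> {s, y} \<in> E)"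

definition half_square_edges :: "'a set set \<Rightarrow> 'a set \<Rightarrow> 'a set set" where
  "half_square_edges E W = {{x, y} | x y. x \<in> W \<and> y \<in> W \<and> dist2 E x y}"

definition planar_graph :: "'a set \<Rightarrow> 'a set set \<Rightarrow> bool" where
  "planar_graph V E \<longleftrightarrow>
     (\<exists>(p :: 'a \<Rightarrow> complex) (g :: 'a set \<Rightarrow> real \<Rightarrow> complex).
        inj_on p V \<and>
        (\<forall>e\<in>E. arc (g e) \<and> {pathstart (g e), pathfinish (g e)} = p ` e) \<and>
        (\<forall>e\<in>E. \<forall>v\<in>V. p v \<in> path_image (g e) \<longrightarrow> v \<in> e) \<and>
        (\<forall>e\<in>E. \<forall>e'\<in>E. e \<noteq> e' \<longrightarrow>
            path_image (g e) \<inter> path_image (g e') \<subseteq> p ` (e \<inter> e')))"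

text \<open>A cycle is given by its cyclic vertex sequence; its length is the number of vertices (= edges).\<close>
definition is_cycle :: "'a set \<Rightarrow> 'a set set \<Rightarrow> 'a list \<Rightarrow> bool" where
  "is_cycle V E vs \<longleftrightarrow> length vs \<ge> 3 \<and> distinct vs \<and> set vs \<subseteq> V \<and>
     (\<forall>i < length vs. {vs ! i, vs ! (Suc i mod length vs)} \<in> E)"

definition cycle_edges :: "'a list \<Rightarrow> 'a set set" where
  "cycle_edges vs = {{vs ! i, vs ! (Suc i mod length vs)} | i. i < length vs}"

definition rooted_tree :: "'n set \<Rightarrow> ('n \<Rightarrow> 'n) \<Rightarrow> 'n \<Rightarrow> bool" where
  "rooted_tree N par r \<longleftrightarrow> finite N \<and> r \<in> N \<and> par r = r \<and>
     (\<forall>t\<in>N. par t \<in> N) \<and> (\<forall>t\<in>N. \<exists>k. (par ^^ k) t = r)"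

definition tree_edges :: "'n set \<Rightarrow> ('n \<Rightarrow> 'n) \<Rightarrow> 'n \<Rightarrow> 'n set set" where
  "tree_edges N par r = {{t, par t} | t. t \<in> N \<and> t \<noteq> r}"

definition children :: "'n set \<Rightarrow> ('n \<Rightarrow> 'n) \<Rightarrow> 'n \<Rightarrow> 'n \<Rightarrow> 'n set" where
  "children N par r t = {s \<in> N. s \<noteq> r \<and> par s = t}"

text \<open>s is a descendant of t (t itself included).\<close>
definition descendant :: "('n \<Rightarrow> 'n) \<Rightarrow> 'n \<Rightarrow> 'n \<Rightarrow> bool" where
  "descendant par t s \<longleftrightarrow> (\<exists>k. (par ^^ k) s = t)"

definition connected_sub :: "'n set set \<Rightarrow> 'n set \<Rightarrow> bool" where
  "connected_sub E S \<longleftrightarrow>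
     (\<forall>x\<in>S. \<forall>y\<in>S. (x, y) \<in> {(a, b). a \<in> S \<and> b \<in> S \<and> {a, b} \<in> E}\<^sup>*)"

definition tree_decomposition ::
  "'a set \<Rightarrow> 'a set set \<Rightarrow> 'n set \<Rightarrow> ('n \<Rightarrow> 'n) \<Rightarrow> 'n \<Rightarrow> ('n \<Rightarrow> 'a set) \<Rightarrow> bool" where
  "tree_decomposition V E N par r \<beta> \<longleftrightarrow> rooted_tree N par r \<and>
     (\<forall>t\<in>N. \<beta> t \<subseteq> V) \<and>
     (\<forall>v\<in>V. \<exists>t\<in>N. v \<in> \<beta> t) \<and>
     (\<forall>e\<in>E. \<exists>t\<in>N. e \<subseteq> \<beta> t) \<and>
     (\<forall>v\<in>V. connected_sub (tree_edges N par r) {t \<in> N. v \<in> \<beta> t})"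

definition nice_tree_decomposition ::
  "'a set \<Rightarrow> 'a set set \<Rightarrow> 'n set \<Rightarrow> ('n \<Rightarrow> 'n) \<Rightarrow> 'n \<Rightarrow> ('n \<Rightarrow> 'a set) \<Rightarrow> bool" where
  "nice_tree_decomposition V E N par r \<beta> \<longleftrightarrow> tree_decomposition V E N par r \<beta> \<and>
     \<beta> r = {} \<and>
     (\<forall>t\<in>N.
        (children N par r t = {} \<and> \<beta> t = {}) \<or>
        (\<exists>c v. children N par r t = {c} \<and> v \<notin> \<beta> c \<and> \<beta> t = insert v (\<beta> c)) \<or>
        (\<exists>c v. children N par r t = {c} \<and> v \<in> \<beta> c \<and> \<beta> t = \<beta> c - {v}) \<or>
        (\<exists>c1 c2. c1 \<noteq> c2 \<and> children N par r t = {c1, c2} \<and> \<beta> t = \<beta> c1 \<and> \<beta> t = \<beta> c2))"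

text \<open>Width = maximum bag size minus one (as a real number, to avoid truncation).\<close>
definition td_width :: "'n set \<Rightarrow> ('n \<Rightarrow> 'a set) \<Rightarrow> real" where
  "td_width N \<beta> = real (Max ((\<lambda>t. card (\<beta> t)) ` N)) - 1"

definition gamma :: "'n set \<Rightarrow> ('n \<Rightarrow> 'n) \<Rightarrow> ('n \<Rightarrow> 'a set) \<Rightarrow> 'n \<Rightarrow> 'a set" where
  "gamma N par \<beta> t = \<Union> {\<beta> s | s. s \<in> N \<and> descendant par t s}"

definition nbhd :: "'a set set \<Rightarrow> 'a \<Rightarrow> 'a set" where
  "nbhd E s = {x. {s, x} \<in> E}"

text \<open>Bags of the decomposition of G derived from a decomposition of B
  (VG = V(G), S = S(G), EB = E(B)).\<close>
definition derived_bag ::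
  "'a set \<Rightarrow> 'a set \<Rightarrow> 'a set set \<Rightarrow> 'n set \<Rightarrow> ('n \<Rightarrow> 'n) \<Rightarrow> ('n \<Rightarrow> 'a set) \<Rightarrow> 'n \<Rightarrow> 'a set" where
  "derived_bag VG S EB N par \<beta> t =
     (\<beta> t \<inter> VG) \<union> \<Union> {nbhd EB s \<inter> gamma N par \<beta> t | s. s \<in> \<beta> t \<inter> S}"

definition crossing_edges :: "'a list \<Rightarrow> 'a set \<Rightarrow> 'a set \<Rightarrow> nat" where
  "crossing_edges C X Y = card {e \<in> cycle_edges C. \<exists>u v. e = {u, v} \<and> u \<in> X \<and> v \<in> Y}"

end

theory Submission
  imports Defs
begin

fun pairs :: "'a list \<Rightarrow> ('a \<times> 'a) list" where
  "pairs (x # y # zs) = (x, y) # pairs (y # zs)"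
| "pairs _ = []"

lemma pairs_append: "xs \<noteq> [] \<Longrightarrow> ys \<noteq> [] \<Longrightarrow> pairs (xs @ ys) = pairs xs @ (last xs, hd ys) # pairs ys"
  by (induction xs rule: pairs.induct) (auto simp: neq_Nil_conv)

lemma pairs_rev: "pairs (rev xs) = rev (map (\<lambda>(a,b). (b,a)) (pairs xs))"
proof (induction xs rule: pairs.induct)
  case (1 x y zs)
  have "pairs (rev (x # y # zs)) = pairs (rev (y # zs) @ [x])" by simp
  also have "\<dots> = pairs (rev (y # zs)) @ [(y, x)]"
    by (subst pairs_append) auto
  finally show ?case using 1 by simp
qed auto

lemma length_pairs: "length (pairs xs) = length xs - 1"
  by (induction xs rule: pairs.induct) auto

lemma nth_pairs: "Suc i < length xs \<Longrightarrow> pairs xs ! i = (xs ! i, xs ! Suc i)"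
  by (induction xs arbitrary: i rule: pairs.induct) (auto simp: nth_Cons split: nat.splits)

definition cp :: "'a list \<Rightarrow> nat \<Rightarrow> 'a \<times> 'a" where
  "cp C i = (C ! i, C ! (Suc i mod length C))"

lemma set_pairs_cyc:
  assumes "C \<noteq> []"
  shows "set (pairs (C @ [hd C])) = cp C ` {..<length C}"
proof -
  have len: "length (pairs (C @ [hd C])) = length C" by (simp add: length_pairs)
  have nth: "pairs (C @ [hd C]) ! i = cp C i" if "i < length C" for i
  proof -
    have "pairs (C @ [hd C]) ! i = ((C @ [hd C]) ! i, (C @ [hd C]) ! Suc i)"
      using that by (simp add: nth_pairs)
    moreover have "(C @ [hd C]) ! i = C ! i" using that by (simp add: nth_append)
    moreover have "(C @ [hd C]) ! Suc i = C ! (Suc i mod length C)"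
    proof (cases "Suc i < length C")
      case True then show ?thesis by (simp add: nth_append)
    next
      case False
      then have "Suc i = length C" using that by simp
      then show ?thesis using assms by (simp add: nth_append hd_conv_nth)
    qed
    ultimately show ?thesis by (simp add: cp_def)
  qed
  show ?thesis
    by (auto simp: set_conv_nth len nth image_def) (metis len nth)+
qed

definition cs :: "('a \<Rightarrow> 'a \<Rightarrow> nat) \<Rightarrow> 'a list \<Rightarrow> nat" where
  "cs g C = sum_list (map (\<lambda>(x,y). g x y) (pairs (C @ [hd C])))"

lemma two_opt:
  fixes C :: "'a list"
  assumes "distinct C" "i < j" "j < length C"
  defines "C2 \<equiv> take (Suc i) C @ rev (take (j - i) (drop (Suc i) C)) @ drop (Suc j) C"
  shows "length C2 = length C \<and> set C2 = set C \<and> distinct C2 \<and>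
    (\<exists>P M R. pairs (C @ [hd C]) = P @ (C!i, C!(Suc i mod length C)) # M @ (C!j, C!(Suc j mod length C)) # R \<and>
             pairs (C2 @ [hd C2]) = P @ (C!i, C!j) # rev (map (\<lambda>(a,b). (b,a)) M) @ (C!(Suc i mod length C), C!(Suc j mod length C)) # R)"
proof -
  define P where "P = take (Suc i) C"
  define M where "M = take (j - i) (drop (Suc i) C)"
  define D where "D = drop (Suc j) C"
  define R where "R = D @ [hd C]"
  have "take (Suc i + (j - i)) C = P @ M" unfolding P_def M_def by (rule take_add)
  moreover have "Suc i + (j - i) = Suc j" using assms by simp
  ultimately have CPM: "C = P @ M @ D" unfolding D_def by (metis append_assoc append_take_drop_id)
  have C2: "C2 = P @ rev M @ D" unfolding C2_def P_def M_def D_def by simp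
  have Cne: "C \<noteq> []" using assms by auto
  have Pne: "P \<noteq> []" using Cne unfolding P_def by simp
  have lenM: "length M = j - i" using assms unfolding M_def by simp
  have "length M > 0" using lenM assms(2) by simp
  then have Mne: "M \<noteq> []" by auto
  have hdC: "hd C = hd P" using CPM Pne by simp
  have hdC2: "hd C2 = hd C" using C2 Pne hdC by simp
  have lastP: "last P = C ! i" using assms Pne unfolding P_def by (simp add: last_conv_nth min_def)
  have hdM: "hd M = C ! (Suc i mod length C)"
    using assms unfolding M_def by (simp add: hd_conv_nth)
  have lastM: "last M = C ! j"
  proof -
    have "last M = M ! (j - i - 1)" using Mne lenM by (simp add: last_conv_nth)
    also have "\<dots> = C ! j" unfolding M_def using assms by simp
    finally show ?thesis .
  qed
  have hdR: "hd R = C ! (Suc j mod length C)"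
  proof (cases "Suc j < length C")
    case True then show ?thesis unfolding R_def D_def by (simp add: hd_conv_nth nth_append)
  next
    case False
    then have "Suc j = length C" using assms by simp
    then show ?thesis unfolding R_def D_def using assms Cne by (simp add: hd_conv_nth)
  qed
  have e1: "C @ [hd C] = P @ M @ R" using CPM unfolding R_def by simp
  have e2: "C2 @ [hd C2] = P @ rev M @ R" using C2 hdC2 unfolding R_def by simp
  have R_ne: "R \<noteq> []" unfolding R_def by simp
  have p1: "pairs (C @ [hd C]) = pairs P @ (C!i, C!(Suc i mod length C)) # pairs M @ (C!j, C!(Suc j mod length C)) # pairs R"
    unfolding e1 using Pne Mne R_ne
    by (simp add: pairs_append lastP hdM lastM hdR)
  have p2: "pairs (C2 @ [hd C2]) = pairs P @ (C!i, C!j) # rev (map (\<lambda>(a,b). (b,a)) (pairs M)) @ (C!(Suc i mod length C), C!(Suc j mod length C)) # pairs R"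
    unfolding e2 using Pne Mne R_ne
    by (simp add: pairs_append lastP hdM lastM hdR hd_rev last_rev pairs_rev)
  have "length C2 = length C" using C2 CPM by simp
  moreover have "set C2 = set C" using C2 CPM by auto
  moreover have "distinct C2" using C2 CPM assms(1) by auto
  ultimately show ?thesis using p1 p2 by blast
qed


lemma desc_refl: "descendant par t t"
  unfolding descendant_def by (rule exI[of _ 0]) simp

lemma desc_trans: "descendant par a b \<Longrightarrow> descendant par b c \<Longrightarrow> descendant par a c"
  unfolding descendant_def by (metis comp_apply funpow_add)

lemma desc_comparable:
  assumes "descendant par a c" "descendant par b c"
  shows "descendant par a b \<or> descendant par b a"
proof -
  obtain k m where k: "(par^^k) c = a" and m: "(par^^m) c = b"
    using assms unfolding descendant_def by blast
  show ?thesis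
  proof (cases "k \<le> m")
    case True
    then have "(par^^(m-k)) a = b" using k m by (metis comp_apply funpow_add le_add_diff_inverse2)
    then show ?thesis unfolding descendant_def by blast
  next
    case False
    then have "(par^^(k-m)) b = a" using k m by (metis comp_apply funpow_add le_add_diff_inverse2 nat_le_linear)
    then show ?thesis unfolding descendant_def by blast
  qed
qed

lemma gamma_iff: "x \<in> gamma N par \<beta> t \<longleftrightarrow> (\<exists>s\<in>N. descendant par t s \<and> x \<in> \<beta> s)"
  unfolding gamma_def by blast

lemma lemL:
  assumes td: "tree_decomposition V E N par r \<beta>" and "v \<in> V" "d \<in> N" "c \<in> N" "v \<in> \<beta> d" "v \<in> \<beta> c"
    and "descendant par t d" "\<not> descendant par t c"
  shows "v \<in> \<beta> t"
proof -
  let ?S = "{t\<in>N. v\<in>\<beta> t}"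
  let ?R = "{(a,b). a\<in>?S \<and> b\<in>?S \<and> {a,b} \<in> tree_edges N par r}"
  have "(d,c) \<in> ?R\<^sup>*" using assms unfolding tree_decomposition_def connected_sub_def by blast
  then show ?thesis using assms(7,8)
  proof (induction rule: rtrancl_induct)
    case base then show ?case by simp
  next
    case (step y z)
    show ?case
    proof (cases "descendant par t y")
      case False then show ?thesis using step by blast
    next
      case True
      from step(2) have yS: "y \<in> ?S" and "{y,z} \<in> tree_edges N par r" by auto
      then obtain u where u: "{y,z} = {u, par u}" "u \<in> N" "u \<noteq> r" unfolding tree_edges_def by blast
      hence "(y = u \<and> z = par u) \<or> (y = par u \<and> z = u)" by (auto simp: doubleton_eq_iff)
      then show ?thesis
      proof
        assume a: "y = u \<and> z = par u"
        from True obtain k where k: "(par^^k) y = t" unfolding descendant_def by blast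
        show ?thesis
        proof (cases k)
          case 0 with k yS show ?thesis by simp
        next
          case (Suc m)
          with k have "(par^^m) (par y) = t" by (simp add: funpow_Suc_right del: funpow.simps)
          hence "descendant par t z" using a unfolding descendant_def by blast
          with step show ?thesis by blast
        qed
      next
        assume a: "y = par u \<and> z = u"
        from True obtain k where k: "(par^^k) y = t" unfolding descendant_def by blast
        hence "(par^^(Suc k)) z = t" using a by (simp add: funpow_Suc_right del: funpow.simps)
        hence "descendant par t z" unfolding descendant_def by blast
        with step show ?thesis by blast
      qed
    qed
  qed
qed

definition Dd :: "'n set \<Rightarrow> ('n\<Rightarrow>'n) \<Rightarrow> ('n \<Rightarrow> 'a set) \<Rightarrow> 'a \<Rightarrow> 'a \<Rightarrow> nat" where
  "Dd N par \<beta> x y = (\<Sum>t'\<in>N. if (x \<in> gamma N par \<beta> t') = (y \<in> gamma N par \<beta> t') then 0 else 1)"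

lemma Dd_sym: "Dd N par \<beta> x y = Dd N par \<beta> y x"
  unfolding Dd_def by (rule sum.cong) auto

lemma not_in_gamma_incomp:
  assumes td: "tree_decomposition V E N par r \<beta>" and "p \<in> V" "p \<in> gamma N par \<beta> t" "p \<notin> \<beta> t"
    and "\<not> descendant par t t'" "\<not> descendant par t' t"
  shows "p \<notin> gamma N par \<beta> t'"
proof
  assume "p \<in> gamma N par \<beta> t'"
  then obtain c where c: "c \<in> N" "descendant par t' c" "p \<in> \<beta> c" by (auto simp: gamma_iff)
  from assms(3) obtain d where d: "d \<in> N" "descendant par t d" "p \<in> \<beta> d" by (auto simp: gamma_iff)
  have "\<not> descendant par t c" using desc_comparable[OF _ c(2)] assms(5,6) by blast
  then have "p \<in> \<beta> t" using lemL[OF td assms(2) d(1) c(1) d(3) c(3) d(2)] by blast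
  with assms(4) show False by blast
qed

lemma gamma_mono: "descendant par t t' \<Longrightarrow> gamma N par \<beta> t' \<subseteq> gamma N par \<beta> t"
  by (auto simp: gamma_iff) (meson desc_trans)

lemma Dd_ineq:
  assumes td: "tree_decomposition V E N par r \<beta>" and tN: "t \<in> N"
    and "p \<in> V" "q \<in> V" "p \<in> gamma N par \<beta> t" "q \<in> gamma N par \<beta> t" "p \<notin> \<beta> t" "q \<notin> \<beta> t"
    and "u \<notin> gamma N par \<beta> t" "w \<notin> gamma N par \<beta> t"
  shows "Dd N par \<beta> p q + Dd N par \<beta> u w < Dd N par \<beta> p u + Dd N par \<beta> q w"
proof -
  let ?g = "gamma N par \<beta>"
  let ?i = "\<lambda>t' x y. (if (x \<in> ?g t') = (y \<in> ?g t') then 0 else 1::nat)"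
  have fin: "finite N" using td unfolding tree_decomposition_def rooted_tree_def by blast
  have le: "?i t' p q + ?i t' u w \<le> ?i t' p u + ?i t' q w" if "t' \<in> N" for t'
  proof (cases "descendant par t t'")
    case True
    then have "u \<notin> ?g t'" "w \<notin> ?g t'" using gamma_mono[OF True, of N \<beta>] assms(9,10) by auto
    then show ?thesis by auto
  next
    case False
    show ?thesis
    proof (cases "descendant par t' t")
      case True
      then have "p \<in> ?g t'" "q \<in> ?g t'" using gamma_mono[OF True, of N \<beta>] assms(5,6) by auto
      then show ?thesis by auto
    next
      case False2: False
      have "p \<notin> ?g t'" using not_in_gamma_incomp[OF td assms(3,5,7) False False2] .
      moreover have "q \<notin> ?g t'" using not_in_gamma_incomp[OF td assms(4,6,8) False False2] .
      ultimately show ?thesis by auto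
    qed
  qed
  have lt: "?i t p q + ?i t u w < ?i t p u + ?i t q w" using assms(5,6,9,10) by auto
  have "(\<Sum>t'\<in>N. ?i t' p q + ?i t' u w) < (\<Sum>t'\<in>N. ?i t' p u + ?i t' q w)"
    by (rule sum_strict_mono_ex1[OF fin]) (use le lt tN in blast)+
  then show ?thesis unfolding Dd_def sum.distrib .
qed

lemma no_edge_same_side:
  assumes "bipartition V E W U" "x \<in> W" "y \<in> W"
  shows "{x,y} \<notin> E"
proof
  assume "{x,y} \<in> E"
  then obtain w u where "{x,y} = {w,u}" "u \<in> U" "W \<inter> U = {}" using assms(1) unfolding bipartition_def by blast
  then show False using assms(2,3) by (auto simp: doubleton_eq_iff)
qed

lemma mk_edge:
  assumes "bipartition VB EB VG S" "x \<in> VG" "y \<in> VG" "x \<noteq> y" "{s,x} \<in> EB" "{s,y} \<in> EB"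
  shows "{x,y} \<in> half_square_edges EB VG"
proof -
  have "dist2 EB x y" unfolding dist2_def
    using assms no_edge_same_side[OF assms(1-3)] by (auto simp: insert_commute)
  then show ?thesis unfolding half_square_edges_def using assms by blast
qed

lemma exs:
  assumes td: "tree_decomposition VB EB N par r \<beta>" and bp: "bipartition VB EB VG S"
    and "x \<in> VG" "y \<in> VG" "{x,y} \<in> half_square_edges EB VG"
    and "x \<in> gamma N par \<beta> t" "x \<notin> \<beta> t" "y \<notin> gamma N par \<beta> t"
  shows "\<exists>s. s \<in> \<beta> t \<and> s \<in> S \<and> {s,x} \<in> EB \<and> {s,y} \<in> EB"
proof -
  obtain x' y' where xy: "{x,y} = {x',y'}" "dist2 EB x' y'"
    using assms(5) unfolding half_square_edges_def by blast
  then obtain s where s: "{s,x} \<in> EB" "{s,y} \<in> EB"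
    unfolding dist2_def by (auto simp: doubleton_eq_iff insert_commute)
  have disj: "VG \<inter> S = {}" and VB: "VB = VG \<union> S" using bp unfolding bipartition_def by auto
  have sS: "s \<in> S"
  proof -
    obtain w u where "{s,x} = {w,u}" "w \<in> VG" "u \<in> S" using bp s(1) unfolding bipartition_def by blast
    then show ?thesis using disj assms(3) by (auto simp: doubleton_eq_iff)
  qed
  have sV: "s \<in> VB" using sS VB by blast
  have xV: "x \<in> VB" using assms(3) VB by blast
  obtain a where a: "a \<in> N" "{s,x} \<subseteq> \<beta> a" using td s(1) unfolding tree_decomposition_def by blast
  obtain b where b: "b \<in> N" "{s,y} \<subseteq> \<beta> b" using td s(2) unfolding tree_decomposition_def by blast
  obtain d where d: "d \<in> N" "descendant par t d" "x \<in> \<beta> d" using assms(6) by (auto simp: gamma_iff)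
  have "descendant par t a"
  proof (rule ccontr)
    assume "\<not> descendant par t a"
    then have "x \<in> \<beta> t" using lemL[OF td xV d(1) a(1) d(3) _ d(2)] a(2) by blast
    with assms(7) show False by blast
  qed
  moreover have "\<not> descendant par t b" using b assms(8) by (auto simp: gamma_iff)
  ultimately have "s \<in> \<beta> t" using lemL[OF td sV a(1) b(1)] a(2) b(2) by blast
  then show ?thesis using sS s by blast
qed


lemma three_distinct:
  assumes "finite A" "2 < card A"
  shows "\<exists>a b c. a\<in>A \<and> b\<in>A \<and> c\<in>A \<and> a\<noteq>b \<and> a\<noteq>c \<and> b\<noteq>c"
proof -
  obtain a where a: "a \<in> A" using assms by fastforce
  have "1 < card (A - {a})" using assms a by simp
  then have "A - {a} \<noteq> {}" by (intro notI) simp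
  then obtain b where b: "b \<in> A - {a}" by blast
  have "0 < card (A - {a} - {b})" using assms a b by simp
  then have "A - {a} - {b} \<noteq> {}" by (intro notI) simp
  then obtain c where c: "c \<in> A - {a} - {b}" by blast
  show ?thesis using a b c by blast
qed

lemma sum_swap:
  assumes "\<And>x y. g x y = g y x"
  shows "sum_list (map (\<lambda>(x,y). g x y) (rev (map (\<lambda>(a,b). (b,a)) M))) = sum_list (map (\<lambda>(x,y). (g x y :: nat)) M)"
  by (induction M) (auto simp: assms)

lemma suc_mod_inj:
  assumes "i < L" "j < L" "Suc i mod L = Suc j mod L"
  shows "i = j"
proof -
  have h: "Suc x mod L = (if Suc x = L then 0 else Suc x)" if "x < L" for x
    using that by auto
  show ?thesis using assms h[OF assms(1)] h[OF assms(2)] by (auto split: if_splits)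
qed


theorem lemma25:
  fixes VB :: "'a set" and EB :: "'a set set" and VG S :: "'a set" and EG :: "'a set set"
    and N :: "'n set" and par :: "'n \<Rightarrow> 'n" and r :: 'n and \<beta> :: "'n \<Rightarrow> 'a set"
    and k :: nat and C :: "'a list"
  assumes "simple_graph VB EB"
    and "bipartition VB EB VG S"
    and "planar_graph VB EB"
    and "EG = half_square_edges EB VG"
    and "k > 0"
    and "nice_tree_decomposition VB EB N par r \<beta>"
    and "td_width N \<beta> < 5 * sqrt (2 * real k)"
    and "is_cycle VG EG C"
  shows "\<exists>C'. is_cycle VG EG C' \<and> length C' = length C \<and>
           (\<forall>t\<in>N. real (crossing_edges C' (derived_bag VG S EB N par \<beta> t)
                      (VG - gamma N par (derived_bag VG S EB N par \<beta>) t))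
                   \<le> 20 * sqrt (2 * real k))"
proof -
  have td: "tree_decomposition VB EB N par r \<beta>" using assms(6) unfolding nice_tree_decomposition_def by blast
  have bp: "bipartition VB EB VG S" by fact
  have disj: "VG \<inter> S = {}" and VB: "VB = VG \<union> S" using bp unfolding bipartition_def by auto
  have finN: "finite N" using td unfolding tree_decomposition_def rooted_tree_def by auto
  have finVB: "finite VB" using assms(1) unfolding simple_graph_def by blast
  have bsub: "\<beta> t \<subseteq> VB" if "t\<in>N" for t using td that unfolding tree_decomposition_def by blast
  let ?g = "gamma N par \<beta>"
  let ?D = "Dd N par \<beta>"
  define \<Phi> where "\<Phi> = cs ?D"
  obtain C0 where C0: "is_cycle VG EG C0 \<and> length C0 = length C" and
     minC0: "\<forall>C'. is_cycle VG EG C' \<and> length C' = length C \<longrightarrow> \<Phi> C0 \<le> \<Phi> C'"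
    using ex_has_least_nat[of "\<lambda>C'. is_cycle VG EG C' \<and> length C' = length C" C \<Phi>] assms(8) by blast
  define L where "L = length C0"
  have cyc: "is_cycle VG EG C0" using C0 by blast
  have L3: "L \<ge> 3" and dC: "distinct C0" and sC: "set C0 \<subseteq> VG"
    and eC: "\<forall>i<L. {C0!i, C0!(Suc i mod L)} \<in> EG"
    using cyc unfolding is_cycle_def L_def by auto
  have Cne: "C0 \<noteq> []" using L3 L_def by auto
  have inV: "C0 ! i \<in> VG" if "i < L" for i using sC that L_def by auto
  have inV2: "C0 ! (Suc i mod L) \<in> VG" for i
    using Cne L_def inV by simp
  have edges_C0: "\<forall>(x,y)\<in>set (pairs (C0 @ [hd C0])). {x,y} \<in> EG"
    using eC by (auto simp: set_pairs_cyc[OF Cne] cp_def L_def)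
  show ?thesis
  proof (intro exI conjI ballI)
    show "is_cycle VG EG C0" "length C0 = length C" using C0 by auto
  next
    fix t assume tN: "t \<in> N"
    define I where "I = {i. i < L \<and> (C0!i \<in> ?g t) \<noteq> (C0!(Suc i mod L) \<in> ?g t)}"
    define inn where "inn i = (if C0!i \<in> ?g t then C0!i else C0!(Suc i mod L))" for i
    define out where "out i = (if C0!i \<in> ?g t then C0!(Suc i mod L) else C0!i)" for i
    define Q where "Q i s \<longleftrightarrow> s \<in> \<beta> t \<and> s \<in> S \<and> {s, inn i} \<in> EB \<and> {s, out i} \<in> EB" for i s
    define f where "f i = (if inn i \<in> \<beta> t then inn i else (SOME s. Q i s))" for i
    have finI: "finite I" unfolding I_def by auto
    have exQ: "\<exists>s. Q i s" if "i \<in> I" "inn i \<notin> \<beta> t" for i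
    proof -
      have iL: "i < L" using that I_def by auto
      have "{inn i, out i} \<in> half_square_edges EB VG"
        using eC iL assms(4) unfolding inn_def out_def by (auto simp: insert_commute)
      moreover have "inn i \<in> VG" "out i \<in> VG" using inV[OF iL] inV2 unfolding inn_def out_def by auto
      moreover have "inn i \<in> ?g t" "out i \<notin> ?g t" using that(1) unfolding I_def inn_def out_def by auto
      ultimately show ?thesis using exs[OF td bp, of "inn i" "out i" t] that(2) unfolding Q_def by blast
    qed
    have fQ: "Q i (f i)" if "i \<in> I" "inn i \<notin> \<beta> t" for i
      using exQ[OF that] that(2) unfolding f_def by (simp add: someI_ex)
    have fb: "f i \<in> \<beta> t" if "i \<in> I" for i
      using fQ[OF that] unfolding f_def Q_def by (cases "inn i \<in> \<beta> t") auto
    have innV: "inn i \<in> VG" if "i \<in> I" for i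
      using that inV inV2 unfolding I_def inn_def by auto
    have swap_False: False if ij: "i \<in> I" "j \<in> I" "i < j" "Q i s" "Q j s" "inn i \<notin> \<beta> t" "inn j \<notin> \<beta> t"
      "(C0!i \<in> ?g t) = (C0!j \<in> ?g t)" for i j s
    proof -
      define a where "a = C0!i"
      define b where "b = C0!(Suc i mod L)"
      define c where "c = C0!j"
      define d where "d = C0!(Suc j mod L)"
      have jL: "j < L" using ij I_def by auto
      have iL: "i < L" using ij jL by auto
      define C2 where "C2 = take (Suc i) C0 @ rev (take (j - i) (drop (Suc i) C0)) @ drop (Suc j) C0"
      have to: "length C2 = length C0 \<and> set C2 = set C0 \<and> distinct C2 \<and>
        (\<exists>P M R. pairs (C0 @ [hd C0]) = P @ (a, b) # M @ (c, d) # R \<and>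
             pairs (C2 @ [hd C2]) = P @ (a, c) # rev (map (\<lambda>(a,b). (b,a)) M) @ (b, d) # R)"
        using two_opt[OF dC ij(3) jL[unfolded L_def]] unfolding C2_def a_def b_def c_def d_def L_def by blast
      then obtain P M R where pC: "pairs (C0 @ [hd C0]) = P @ (a, b) # M @ (c, d) # R"
        and pC2: "pairs (C2 @ [hd C2]) = P @ (a, c) # rev (map (\<lambda>(a,b). (b,a)) M) @ (b, d) # R"
        by blast
      have sEB: "{s,a} \<in> EB \<and> {s,b} \<in> EB \<and> {s,c} \<in> EB \<and> {s,d} \<in> EB"
        using ij(4,5,8) unfolding Q_def inn_def out_def a_def b_def c_def d_def by (auto split: if_splits)
      have "a \<noteq> c" unfolding a_def c_def using dC iL jL ij(3) L_def by (simp add: nth_eq_iff_index_eq)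
      have "b \<noteq> d"
      proof
        assume "b = d"
        then have "Suc i mod L = Suc j mod L" unfolding b_def d_def using dC L_def Cne
          by (simp add: nth_eq_iff_index_eq)
        then show False using suc_mod_inj[OF iL jL] ij(3) by simp
      qed
      have abV: "a \<in> VG" "b \<in> VG" "c \<in> VG" "d \<in> VG" unfolding a_def b_def c_def d_def
        using inV iL jL inV2 by auto
      have e1: "{a,c} \<in> EG" using mk_edge[OF bp abV(1,3) \<open>a \<noteq> c\<close>] sEB assms(4) by blast
      have e2: "{b,d} \<in> EG" using mk_edge[OF bp abV(2,4) \<open>b \<noteq> d\<close>] sEB assms(4) by blast
      have edges_C2: "\<forall>(x,y)\<in>set (pairs (C2 @ [hd C2])). {x,y} \<in> EG"
      proof -
        have "\<forall>(x,y)\<in>set M. {x,y} \<in> EG" using edges_C0 unfolding pC by auto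
        then have "\<forall>(x,y)\<in>set (rev (map (\<lambda>(a,b). (b,a)) M)). {x,y} \<in> EG" by (auto simp: insert_commute)
        then show ?thesis using edges_C0 e1 e2 unfolding pC pC2 by auto
      qed
      have C2ne: "C2 \<noteq> []" using to Cne by auto
      have cyc2: "is_cycle VG EG C2"
        unfolding is_cycle_def
      proof (intro conjI allI impI)
        show "3 \<le> length C2" using to L3 L_def by simp
        show "distinct C2" using to by blast
        show "set C2 \<subseteq> VG" using to sC by simp
      next
        fix i' assume "i' < length C2"
        then have "cp C2 i' \<in> set (pairs (C2 @ [hd C2]))" using set_pairs_cyc[OF C2ne] by blast
        then show "{C2 ! i', C2 ! (Suc i' mod length C2)} \<in> EG" using edges_C2 unfolding cp_def by auto
      qed
      have sumeq: "\<Phi> C2 + ?D a b + ?D c d = \<Phi> C0 + ?D a c + ?D b d"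
        unfolding \<Phi>_def cs_def pC pC2 using sum_swap[of ?D M, OF Dd_sym] by simp
      have lt: "?D a c + ?D b d < ?D a b + ?D c d"
      proof (cases "a \<in> ?g t")
        case True
        then have "c \<in> ?g t" "b \<notin> ?g t" "d \<notin> ?g t" "a \<notin> \<beta> t" "c \<notin> \<beta> t"
          using ij unfolding I_def a_def b_def c_def d_def inn_def by auto
        then show ?thesis using Dd_ineq[OF td tN, of a c b d] abV VB True by blast
      next
        case False
        then have "c \<notin> ?g t" "b \<in> ?g t" "d \<in> ?g t" "b \<notin> \<beta> t" "d \<notin> \<beta> t"
          using ij unfolding I_def a_def b_def c_def d_def inn_def by auto
        then have "?D b d + ?D a c < ?D b a + ?D d c" using Dd_ineq[OF td tN, of b d a c] abV VB False by blast
        then show ?thesis by (simp add: Dd_sym[of N par \<beta> b a] Dd_sym[of N par \<beta> d c])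
      qed
      have "\<Phi> C2 < \<Phi> C0" using sumeq lt by linarith
      moreover have "\<Phi> C0 \<le> \<Phi> C2" using minC0 cyc2 to C0 by auto
      ultimately show False by simp
    qed
    have fib: "card {i\<in>I. f i = x} \<le> 2" if "x \<in> \<beta> t" for x
    proof (cases "x \<in> VG")
      case True
      have sub: "{i\<in>I. f i = x} \<subseteq> {i. i < L \<and> C0!i = x} \<union> {i. i < L \<and> C0!(Suc i mod L) = x}"
      proof
        fix i assume i: "i \<in> {i\<in>I. f i = x}"
        have "inn i \<in> \<beta> t"
        proof (rule ccontr)
          assume "inn i \<notin> \<beta> t"
          then have "f i \<in> S" using fQ i unfolding Q_def by auto
          then show False using i True disj by auto
        qed
        then have "inn i = x" using i unfolding f_def by auto
        then show "i \<in> {i. i < L \<and> C0!i = x} \<union> {i. i < L \<and> C0!(Suc i mod L) = x}"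
          using i unfolding inn_def I_def by (auto split: if_splits)
      qed
      have c1: "card {i. i < L \<and> C0!i = x} \<le> Suc 0"
      proof (subst card_le_Suc0_iff_eq)
        show "finite {i. i < L \<and> C0 ! i = x}" by auto
        show "\<forall>a1\<in>{i. i < L \<and> C0 ! i = x}. \<forall>a2\<in>{i. i < L \<and> C0 ! i = x}. a1 = a2"
        proof (intro ballI)
          fix a1 a2 assume a: "a1 \<in> {i. i < L \<and> C0 ! i = x}" "a2 \<in> {i. i < L \<and> C0 ! i = x}"
          then have "a1 < length C0" "a2 < length C0" "C0 ! a1 = C0 ! a2" unfolding L_def by auto
          then show "a1 = a2" using nth_eq_iff_index_eq[OF dC] by blast
        qed
      qed
      have c2: "card {i. i < L \<and> C0!(Suc i mod L) = x} \<le> Suc 0"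
      proof (subst card_le_Suc0_iff_eq)
        show "finite {i. i < L \<and> C0 ! (Suc i mod L) = x}" by auto
        show "\<forall>a1\<in>{i. i < L \<and> C0 ! (Suc i mod L) = x}. \<forall>a2\<in>{i. i < L \<and> C0 ! (Suc i mod L) = x}. a1 = a2"
        proof (intro ballI)
          fix a1 a2 assume a: "a1 \<in> {i. i < L \<and> C0 ! (Suc i mod L) = x}" "a2 \<in> {i. i < L \<and> C0 ! (Suc i mod L) = x}"
          have "Suc a1 mod L < L" "Suc a2 mod L < L" using L3 by auto
          moreover have "C0 ! (Suc a1 mod L) = C0 ! (Suc a2 mod L)" using a by auto
          ultimately have "Suc a1 mod L = Suc a2 mod L" using nth_eq_iff_index_eq[OF dC] unfolding L_def by blast
          then show "a1 = a2" using suc_mod_inj a by auto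
        qed
      qed
      have "card {i\<in>I. f i = x} \<le> card ({i. i < L \<and> C0!i = x} \<union> {i. i < L \<and> C0!(Suc i mod L) = x})"
        by (rule card_mono[OF _ sub]) auto
      also have "\<dots> \<le> 2" using card_Un_le[of "{i. i < L \<and> C0!i = x}" "{i. i < L \<and> C0!(Suc i mod L) = x}"] c1 c2 by linarith
      finally show ?thesis .
    next
      case False
      have props: "inn i \<notin> \<beta> t \<and> Q i x" if "i \<in> I" "f i = x" for i
      proof -
        have "inn i \<notin> \<beta> t" using that False innV unfolding f_def by auto
        then show ?thesis using fQ that by auto
      qed
      show ?thesis
      proof (rule ccontr)
        assume "\<not> ?thesis"
        then have "2 < card {i\<in>I. f i = x}" by simp
        then obtain i1 i2 i3 where d3: "i1 \<in> {i\<in>I. f i = x}" "i2 \<in> {i\<in>I. f i = x}" "i3 \<in> {i\<in>I. f i = x}"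
          "i1 \<noteq> i2" "i1 \<noteq> i3" "i2 \<noteq> i3"
          using three_distinct[of "{i\<in>I. f i = x}"] finI by auto
        have sf2: False if "i \<in> {i\<in>I. f i = x}" "j \<in> {i\<in>I. f i = x}" "i \<noteq> j"
          "(C0!i \<in> ?g t) = (C0!j \<in> ?g t)" for i j
        proof (cases "i < j")
          case True
          then show False using swap_False[of i j x] props that by auto
        next
          case False
          then have "j < i" using that(3) by simp
          then show False using swap_False[of j i x] props that by auto
        qed
        show False
          using sf2[OF d3(1,2,4)] sf2[OF d3(1,3,5)] sf2[OF d3(2,3,6)] by blast
      qed
    qed
    have finb: "finite (\<beta> t)" using bsub[OF tN] finVB finite_subset by blast
    have "I = (\<Union>x\<in>\<beta> t. {i\<in>I. f i = x})" using fb by auto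
    then have "card I \<le> (\<Sum>x\<in>\<beta> t. card {i\<in>I. f i = x})"
      using card_UN_le[OF finb, of "\<lambda>x. {i\<in>I. f i = x}"] by simp
    also have "\<dots> \<le> card (\<beta> t) * 2" using sum_bounded_above[of "\<beta> t" "\<lambda>x. card {i\<in>I. f i = x}" 2] fib by simp
    finally have cardI: "card I \<le> 2 * card (\<beta> t)" by simp
    let ?X = "derived_bag VG S EB N par \<beta> t"
    let ?Y = "VG - gamma N par (derived_bag VG S EB N par \<beta>) t"
    have Xg: "?X \<subseteq> ?g t"
      unfolding derived_bag_def using tN desc_refl[of par t] by (auto simp: gamma_iff)
    have Yg: "?Y \<inter> ?g t = {}"
    proof (rule ccontr)
      assume "?Y \<inter> ?g t \<noteq> {}"
      then obtain v where v: "v \<in> VG" "v \<notin> gamma N par (derived_bag VG S EB N par \<beta>) t" "v \<in> ?g t" by auto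
      then obtain s where "s \<in> N" "descendant par t s" "v \<in> \<beta> s" by (auto simp: gamma_iff)
      then have "v \<in> gamma N par (derived_bag VG S EB N par \<beta>) t"
        using v(1) unfolding gamma_iff derived_bag_def by blast
      with v(2) show False by blast
    qed
    have "{e \<in> cycle_edges C0. \<exists>u v. e = {u, v} \<and> u \<in> ?X \<and> v \<in> ?Y} \<subseteq> (\<lambda>i. {C0!i, C0!(Suc i mod L)}) ` I"
    proof
      fix e assume e: "e \<in> {e \<in> cycle_edges C0. \<exists>u v. e = {u, v} \<and> u \<in> ?X \<and> v \<in> ?Y}"
      then obtain i where i: "i < L" "e = {C0!i, C0!(Suc i mod L)}" unfolding cycle_edges_def L_def by blast
      obtain u v where uv: "e = {u,v}" "u \<in> ?g t" "v \<notin> ?g t" using e Xg Yg by blast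
      have "i \<in> I" using i uv unfolding I_def by (auto simp: doubleton_eq_iff)
      then show "e \<in> (\<lambda>i. {C0!i, C0!(Suc i mod L)}) ` I" using i by blast
    qed
    then have "crossing_edges C0 ?X ?Y \<le> card ((\<lambda>i. {C0!i, C0!(Suc i mod L)}) ` I)"
      unfolding crossing_edges_def by (intro card_mono) (use finI in auto)
    also have "\<dots> \<le> card I" by (rule card_image_le[OF finI])
    finally have cr: "crossing_edges C0 ?X ?Y \<le> 2 * card (\<beta> t)" using cardI by linarith
    have "card (\<beta> t) \<le> Max ((\<lambda>t. card (\<beta> t)) ` N)" using finN tN by (intro Max_ge) auto
    then have "real (card (\<beta> t)) \<le> td_width N \<beta> + 1" unfolding td_width_def by simp
    then have "real (card (\<beta> t)) < 5 * sqrt (2 * real k) + 1" using assms(7) by linarith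
    moreover have "1 \<le> sqrt (2 * real k)" using assms(5) by simp
    moreover have "real (crossing_edges C0 ?X ?Y) \<le> 2 * real (card (\<beta> t))"
      using cr by (metis of_nat_le_iff of_nat_mult of_nat_numeral)
    ultimately show "real (crossing_edges C0 ?X ?Y) \<le> 20 * sqrt (2 * real k)"
      by linarith
  qed
qed

end
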